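(* Let $k\ge1$, $G=(V,E)$ an inductively $k$-independent graph with $k$-independence ordering $v_1,\dots,v_n$, $f:2^V\to\mathbb{R}_{\ge0}$ submodular with $f(\emptyset)=0$, $\beta>0$ and $p\in(0,1)$. Run algorithm PD-RAND (described in the context). For each $i$, let $S_i$ be the (random) stack just before $v_i$ is processed, $B_i=N(v_i)\cap\{v_1,\dots,v_{i-1}\}$, $B_i'=B_i\cup\{v_i\}$, and $w(X)=\sum_{v_j\in X}w_j$. Then \[ \mathbb{E}\big[f_{S_i}(v_i)\,\mathbf{1}_{v_i\notin S_{\mathrm{end}}}\big]\le \max\Big\{\frac{1-p}{p},\,1+\beta\Big\}\,\mathbb{E}\big[w(B_i'\cap S_{\mathrm{end}})\big]. \]
   Context: $N(v)$ is the neighbourhood of $v$ (excluding $v$); $G$ is inductively $k$-independent with $k$-independence ordering $v_1,\dots,v_n$ if for every $i$, $G[N(v_i)\cap\{v_i,\dots,v_n\}]$ has no independent set of size more than $k$. For $S\subseteq V$, $f_S(v)=f(S\cup\{v\})-f(S)$. Algorithm PD-RAND (parameters $\beta>0$, $p\in(0,1)$). Phase 1: start with $S=\emptyset$ (a stack) and $w_1=\dots=w_n=0$. For $i=1,\dots,n$: let $C_i=N(v_i)\cap S$ for the current $S$; if $f_S(v_i)>(1+\beta)\sum_{v_j\in C_i}w_j$, then with probability $p$ (independently of all else) set $w_i=f_S(v_i)-\sum_{v_j\in C_i}w_j$ (with $S$ the set before insertion) and push $v_i$ onto $S$; in all other cases leave $w_i=0$ and do not add $v_i$. Let $S_{\mathrm{end}}$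 be $S$ at the end of Phase 1. Phase 2: with $S_{\mathrm{out}}=\emptyset$, pop vertices of $S_{\mathrm{end}}$ in reverse insertion order, adding a popped $v$ to $S_{\mathrm{out}}$ whenever $S_{\mathrm{out}}\cup\{v\}$ is independent. Output $S_{\mathrm{out}}$. *)

theory Defs
  imports "HOL-Probability.Probability"
begin

text \<open>Vertices are 0,...,n-1; the k-independence ordering v_1,...,v_n is the index order.
  The graph is given by a symmetric irreflexive adjacency relation E.\<close>

definition nbhd :: "(nat \<Rightarrow> nat \<Rightarrow> bool) \<Rightarrow> nat \<Rightarrow> nat \<Rightarrow> nat set" where
  "nbhd E n v = {u. u < n \<and> E v u}"

definition indep_set :: "(nat \<Rightarrow> nat \<Rightarrow> bool) \<Rightarrow> nat set \<Rightarrow> bool" where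
  "indep_set E I \<longleftrightarrow> (\<forall>x\<in>I. \<forall>y\<in>I. \<not> E x y)"

definition simple_graph :: "(nat \<Rightarrow> nat \<Rightarrow> bool) \<Rightarrow> bool" where
  "simple_graph E \<longleftrightarrow> (\<forall>x y. E x y \<longrightarrow> E y x) \<and> (\<forall>x. \<not> E x x)"

definition inductively_k_independent :: "(nat \<Rightarrow> nat \<Rightarrow> bool) \<Rightarrow> nat \<Rightarrow> nat \<Rightarrow> bool" where
  "inductively_k_independent E n k \<longleftrightarrow>
     (\<forall>i<n. \<forall>I. I \<subseteq> nbhd E n i \<inter> {i..<n} \<and> indep_set E I \<longrightarrow> card I \<le> k)"

definition submodular_on :: "nat set \<Rightarrow> (nat set \<Rightarrow> real) \<Rightarrow> bool" where
  "submodular_on V f \<longleftrightarrow>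
     (\<forall>A B. A \<subseteq> V \<longrightarrow> B \<subseteq> V \<longrightarrow> f (A \<union> B) + f (A \<inter> B) \<le> f A + f B)"

definition marg :: "(nat set \<Rightarrow> real) \<Rightarrow> nat set \<Rightarrow> nat \<Rightarrow> real" where
  "marg f S v = f (S \<union> {v}) - f S"

type_synonym state = "nat set \<times> (nat \<Rightarrow> real)"

text \<open>One step of Phase 1 of PD-RAND on vertex v_i: state = (stack contents S as a set, weights w).\<close>
definition pd_step :: "(nat \<Rightarrow> nat \<Rightarrow> bool) \<Rightarrow> (nat set \<Rightarrow> real) \<Rightarrow> real \<Rightarrow> real \<Rightarrow> nat \<Rightarrow> state \<Rightarrow> state pmf" where
  "pd_step E f \<beta> p i st =
     (let S = fst st; w = snd st; C = {j \<in> S. E i j}; g = marg f S i in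
      if g > (1 + \<beta>) * sum w C then
        map_pmf (\<lambda>b. if b then (S \<union> {i}, w(i := g - sum w C)) else (S, w)) (bernoulli_pmf p)
      else return_pmf (S, w))"

text \<open>Distribution of the history [state_0, ..., state_i] of Phase 1 after processing
  v_1..v_i; state_i is the state just before v_{i+1} (index i) is processed.\<close>
fun pd_hist :: "(nat \<Rightarrow> nat \<Rightarrow> bool) \<Rightarrow> (nat set \<Rightarrow> real) \<Rightarrow> real \<Rightarrow> real \<Rightarrow> nat \<Rightarrow> state list pmf" where
  "pd_hist E f \<beta> p 0 = return_pmf [({}, (\<lambda>_. 0))]"
| "pd_hist E f \<beta> p (Suc i) =
     pd_hist E f \<beta> p i \<bind> (\<lambda>h. map_pmf (\<lambda>s. h @ [s]) (pd_step E f \<beta> p i (last h)))"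

end

theory Submission
  imports Defs
begin

lemma integral_bind_pmf_fin:
  fixes F :: "'b \<Rightarrow> real"
  assumes fA: "finite (set_pmf A)" and fK: "\<And>h. h \<in> set_pmf A \<Longrightarrow> finite (set_pmf (K h))"
  shows "measure_pmf.expectation (bind_pmf A K) F =
         measure_pmf.expectation A (\<lambda>h. measure_pmf.expectation (K h) F)"
proof -
  define T where "T = (\<Union>h\<in>set_pmf A. set_pmf (K h))"
  have fT: "finite T" using fA fK unfolding T_def by auto
  have "measure_pmf.expectation (bind_pmf A K) F = (\<Sum>x\<in>T. pmf (bind_pmf A K) x * F x)"
    by (subst integral_measure_pmf[OF fT]) (auto simp: T_def)
  also have "\<dots> = (\<Sum>x\<in>T. (\<Sum>h\<in>set_pmf A. pmf A h * pmf (K h) x) * F x)"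
  proof (rule sum.cong[OF refl])
    fix x assume "x \<in> T"
    have "pmf (bind_pmf A K) x = measure_pmf.expectation A (\<lambda>h. pmf (K h) x)"
      by (rule pmf_bind)
    also have "\<dots> = (\<Sum>h\<in>set_pmf A. pmf A h * pmf (K h) x)"
      by (subst integral_measure_pmf[OF fA]) auto
    finally show "pmf (bind_pmf A K) x * F x = (\<Sum>h\<in>set_pmf A. pmf A h * pmf (K h) x) * F x" by simp
  qed
  also have "\<dots> = (\<Sum>h\<in>set_pmf A. pmf A h * (\<Sum>x\<in>T. pmf (K h) x * F x))"
    by (simp add: sum_distrib_left sum_distrib_right mult.assoc sum.swap[of _ T])
  also have "\<dots> = (\<Sum>h\<in>set_pmf A. pmf A h * measure_pmf.expectation (K h) F)"
  proof (rule sum.cong[OF refl])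
    fix h assume h: "h \<in> set_pmf A"
    have "measure_pmf.expectation (K h) F = (\<Sum>x\<in>T. pmf (K h) x * F x)"
      by (subst integral_measure_pmf[OF fT]) (use h in \<open>auto simp: T_def\<close>)
    then show "pmf A h * (\<Sum>x\<in>T. pmf (K h) x * F x) = pmf A h * measure_pmf.expectation (K h) F" by simp
  qed
  also have "\<dots> = measure_pmf.expectation A (\<lambda>h. measure_pmf.expectation (K h) F)"
    by (subst integral_measure_pmf[OF fA]) auto
  finally show ?thesis .
qed

lemma step_cases:
  assumes "s' \<in> set_pmf (pd_step E f \<beta> p i (S, w))"
  shows "s' = (S, w) \<or> (marg f S i > (1+\<beta>) * sum w {j\<in>S. E i j} \<and>
          s' = (S \<union> {i}, w(i := marg f S i - sum w {j\<in>S. E i j})))"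
  using assms unfolding pd_step_def Let_def by (auto split: if_splits)

lemma step_finite: "finite (set_pmf (pd_step E f \<beta> p i s))"
  unfolding pd_step_def Let_def by auto

lemma hist_finite: "finite (set_pmf (pd_hist E f \<beta> p m))"
  by (induction m) (auto intro!: step_finite)


lemma step_nonneg:
  assumes "s' \<in> set_pmf (pd_step E f \<beta> p i s)" "\<forall>j. snd s j \<ge> 0" "\<beta> \<ge> 0"
  shows "\<forall>j. snd s' j \<ge> 0"
proof -
  obtain S w where s: "s = (S, w)" by (cases s)
  have W: "sum w {j\<in>S. E i j} \<ge> 0" using assms(2) s by (auto intro: sum_nonneg)
  from step_cases[OF assms(1)[unfolded s]] show ?thesis
  proof
    assume "s' = (S, w)" then show ?thesis using assms(2) s by auto
  next
    assume a: "marg f S i > (1+\<beta>) * sum w {j\<in>S. E i j} \<and>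
          s' = (S \<union> {i}, w(i := marg f S i - sum w {j\<in>S. E i j}))"
    have "marg f S i - sum w {j\<in>S. E i j} \<ge> 0"
    proof -
      have "\<beta> * sum w {j\<in>S. E i j} \<ge> 0" using W assms(3) by simp
      then show ?thesis using a by (simp add: algebra_simps)
    qed
    then show ?thesis using a assms(2) s by auto
  qed
qed

lemma hist_inv:
  assumes "h \<in> set_pmf (pd_hist E f \<beta> p m)" "\<beta> \<ge> 0"
  shows "length h = Suc m \<and> h ! 0 = ({}, (\<lambda>_. 0)) \<and>
    (\<forall>a b. a \<le> b \<longrightarrow> b \<le> m \<longrightarrow> fst (h!a) \<subseteq> fst (h!b) \<and> fst (h!b) \<subseteq> fst (h!a) \<union> {a..<b}
       \<and> (\<forall>j<a. snd (h!b) j = snd (h!a) j)) \<and>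
    (\<forall>a\<le>m. \<forall>j. snd (h!a) j \<ge> 0)"
  using assms(1)
proof (induction m arbitrary: h)
  case 0
  then show ?case by auto
next
  case (Suc m)
  then obtain h0 s where h0: "h0 \<in> set_pmf (pd_hist E f \<beta> p m)" and h: "h = h0 @ [s]"
    and s: "s \<in> set_pmf (pd_step E f \<beta> p m (last h0))" by auto
  note IH = Suc.IH[OF h0]
  have len: "length h0 = Suc m" using IH by simp
  have "h0 \<noteq> []" using len by auto
  then have last: "last h0 = h0 ! m" using len by (simp add: last_conv_nth)
  have nth1: "h ! a = h0 ! a" if "a \<le> m" for a using that len h by (simp add: nth_append)
  have nth2: "h ! Suc m = s" using len h by (metis nth_append_length)
  obtain S w where Sw: "h0 ! m = (S, w)" by (cases "h0 ! m")
  have sc: "s = (S, w) \<or> s = (S \<union> {m}, w(m := marg f S m - sum w {j\<in>S. E m j}))"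
    using step_cases[OF s[unfolded last Sw]] by auto
  have sub: "S \<subseteq> fst s" "fst s \<subseteq> S \<union> {m}" "\<forall>j<m. snd s j = w j" using sc by auto
  have nn: "\<forall>j. snd s j \<ge> 0"
    using step_nonneg[OF s, of ] IH last Sw assms(2) by auto
  have A: "\<forall>a b. a \<le> b \<longrightarrow> b \<le> Suc m \<longrightarrow> fst (h!a) \<subseteq> fst (h!b) \<and> fst (h!b) \<subseteq> fst (h!a) \<union> {a..<b}
       \<and> (\<forall>j<a. snd (h!b) j = snd (h!a) j)"
  proof (intro allI impI)
    fix a b assume ab: "a \<le> b" "b \<le> Suc m"
    show "fst (h ! a) \<subseteq> fst (h ! b) \<and> fst (h ! b) \<subseteq> fst (h ! a) \<union> {a..<b} \<and> (\<forall>j<a. snd (h ! b) j = snd (h ! a) j)"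
    proof (cases "b \<le> m")
      case True
      then show ?thesis using IH ab nth1 by auto
    next
      case False
      then have b: "b = Suc m" using ab by simp
      show ?thesis
      proof (cases "a = Suc m")
        case True then show ?thesis using b by simp
      next
        case False
        then have am: "a \<le> m" using ab b by simp
        have I: "fst (h0!a) \<subseteq> S" "S \<subseteq> fst (h0!a) \<union> {a..<m}" "\<forall>j<a. w j = snd (h0!a) j"
          using IH am Sw by (metis fst_conv snd_conv order_refl)+
        show ?thesis unfolding b nth2 nth1[OF am] using I sub am by fastforce
      qed
    qed
  qed
  have B: "\<forall>a\<le>Suc m. \<forall>j. snd (h!a) j \<ge> 0"
  proof (intro allI impI)
    fix a j assume a: "a \<le> Suc m"
    show "0 \<le> snd (h ! a) j"
    proof (cases "a = Suc m")
      case True then show ?thesis using nth2 nn by simp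
    next
      case False then show ?thesis using IH nth1 a by auto
    qed
  qed
  have "length h = Suc (Suc m)" using h len by simp
  moreover have "h ! 0 = ({}, \<lambda>_. 0)" using nth1[of 0] IH by simp
  ultimately show ?case using A B by blast
qed

lemma hist_len: "h \<in> set_pmf (pd_hist E f \<beta> p m) \<Longrightarrow> length h = Suc m"
  by (induction m arbitrary: h) auto

lemma hist_marginal:
  "map_pmf (take (Suc m)) (pd_hist E f \<beta> p (m + d)) = pd_hist E f \<beta> p m"
proof (induction d)
  case 0
  have "map_pmf (take (Suc m)) (pd_hist E f \<beta> p m) = map_pmf id (pd_hist E f \<beta> p m)"
    by (rule map_pmf_cong) (use hist_len[of _ E f \<beta> p m] in auto)
  then show ?case by simp
next
  case (Suc d)
  have "map_pmf (take (Suc m)) (pd_hist E f \<beta> p (m + Suc d))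
     = pd_hist E f \<beta> p (m + d) \<bind> (\<lambda>h. map_pmf (\<lambda>s. take (Suc m) (h @ [s])) (pd_step E f \<beta> p (m+d) (last h)))"
    by (simp add: map_bind_pmf map_pmf_comp)
  also have "\<dots> = pd_hist E f \<beta> p (m + d) \<bind> (\<lambda>h. return_pmf (take (Suc m) h))"
  proof (rule bind_pmf_cong[OF refl])
    fix h assume "h \<in> set_pmf (pd_hist E f \<beta> p (m + d))"
    then have "length h = Suc (m+d)" using hist_len by blast
    then show "map_pmf (\<lambda>s. take (Suc m) (h @ [s])) (pd_step E f \<beta> p (m+d) (last h)) = return_pmf (take (Suc m) h)"
      by simp
  qed
  also have "\<dots> = map_pmf (take (Suc m)) (pd_hist E f \<beta> p (m + d))"
    by (simp add: map_pmf_def)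
  finally show ?case using Suc.IH by simp
qed


lemma key_arith:
  fixes g W c \<beta> p :: real
  assumes "g > (1+\<beta>)*W" "W \<ge> 0" "\<beta> > 0" "0 < p" "p < 1" "c \<ge> (1-p)/p" "c \<ge> 1+\<beta>"
  shows "0 * p + g * (1 - p) \<le> c * (g * p + W * (1 - p))"
proof -
  have g: "g \<ge> 0" using assms(1,2,3) by (smt (verit) mult_nonneg_nonneg)
  have "c * p \<ge> 1 - p" using assms(4,6) by (simp add: field_simps)
  then have "g * (1-p) \<le> c * g * p" using g by (smt (verit) mult.commute mult_left_mono mult.assoc)
  moreover have "c * W * (1-p) \<ge> 0" using assms(2,3,5,7) by simp
  ultimately show ?thesis by (simp add: algebra_simps)
qed

lemma local_ineq:
  assumes h: "h \<in> set_pmf (pd_hist E f \<beta> p i)" and "\<beta> > 0" "0 < p" "p < 1" "i < n"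
  defines "c \<equiv> max ((1 - p) / p) (1 + \<beta>)"
  defines "X \<equiv> nbhd E n i \<inter> {..<i} \<union> {i}"
  shows "measure_pmf.expectation (map_pmf (\<lambda>s. h @ [s]) (pd_step E f \<beta> p i (last h)))
           (\<lambda>h'. marg f (fst (h' ! i)) i * (if i \<notin> fst (h' ! Suc i) then 1 else 0))
       \<le> c * measure_pmf.expectation (map_pmf (\<lambda>s. h @ [s]) (pd_step E f \<beta> p i (last h)))
           (\<lambda>h'. sum (snd (h' ! Suc i)) (X \<inter> fst (h' ! Suc i)))"
proof -
  note inv = hist_inv[OF h less_imp_le[OF assms(2)]]
  have len: "length h = Suc i" using conjunct1[OF inv] .
  have h0i: "h ! 0 = ({}, \<lambda>_. 0)" using conjunct1[OF conjunct2[OF inv]] .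
  note mono = conjunct1[OF conjunct2[OF conjunct2[OF inv]]]
  note nonn = conjunct2[OF conjunct2[OF conjunct2[OF inv]]]
  have "h \<noteq> []" using len by auto
  then have last: "last h = h ! i" using len by (simp add: last_conv_nth)
  obtain S w where Sw: "h ! i = (S, w)" by (cases "h ! i")
  have "fst (h!i) \<subseteq> fst (h!0) \<union> {0..<i}" using mono by blast
  then have Ssub: "S \<subseteq> {..<i}" using Sw h0i by auto
  have "\<forall>j. snd (h!i) j \<ge> 0" using nonn by blast
  then have wnn: "\<forall>j. w j \<ge> 0" using Sw by simp
  define C where "C = {j\<in>S. E i j}"
  define W where "W = sum w C"
  define g where "g = marg f S i"
  have fC: "finite C" by (rule finite_subset[of _ "{..<i}"]) (use Ssub in \<open>auto simp: C_def\<close>)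
  have W0: "W \<ge> 0" unfolding W_def using wnn by (simp add: sum_nonneg)
  have iS: "i \<notin> S" using Ssub by auto
  have XS: "X \<inter> S = C" using Ssub assms(5) unfolding X_def C_def nbhd_def by auto
  have XSi: "X \<inter> (S \<union> {i}) = insert i C" using Ssub assms(5) unfolding X_def C_def nbhd_def by auto
  have iC: "i \<notin> C" using iS C_def by auto
  have nth_a: "(h @ [s]) ! i = (S, w)" for s using len Sw by (simp add: nth_append)
  have nth_b: "(h @ [s]) ! Suc i = s" for s using len by (metis nth_append_length)
  have c1: "c \<ge> (1-p)/p" "c \<ge> 1+\<beta>" unfolding c_def by auto
  show ?thesis
  proof (cases "g > (1+\<beta>) * W")
    case True
    have st: "pd_step E f \<beta> p i (last h) =
      map_pmf (\<lambda>b. if b then (S \<union> {i}, w(i := g - W)) else (S, w)) (bernoulli_pmf p)"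
      using True unfolding last Sw pd_step_def Let_def g_def W_def C_def fst_conv snd_conv by simp
    have sumi: "sum (w(i := g - W)) (insert i C) = g"
    proof -
      have "sum (w(i := g - W)) C = sum w C" using iC by (intro sum.cong) auto
      then show ?thesis using fC iC by (simp add: W_def)
    qed
    have sumi': "(\<Sum>x\<in>X \<inter> insert i S. if x = i then g - W else w x) = g"
      using XSi sumi by (simp add: fun_upd_def)
    show ?thesis
      unfolding st using assms(3,4)
      apply (simp add: map_pmf_comp nth_a nth_b iS XS XSi sumi flip: g_def W_def)
      using key_arith[OF True W0 assms(2,3,4) c1] sumi' by (simp add: W_def)
  next
    case False
    have st: "pd_step E f \<beta> p i (last h) = return_pmf (S, w)"
      using False unfolding last Sw pd_step_def Let_def g_def W_def C_def by simp
    have "g \<le> c * W"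
      using False c1(2) W0 by (smt (verit) mult_right_mono)
    then show ?thesis
      unfolding st by (simp add: nth_a nth_b iS XS flip: g_def W_def)
  qed
qed


theorem lemma8:
  fixes E :: "nat \<Rightarrow> nat \<Rightarrow> bool" and n k i :: nat and f :: "nat set \<Rightarrow> real"
    and \<beta> p :: real
  assumes "k \<ge> 1"
    and "simple_graph E"
    and "inductively_k_independent E n k"
    and "submodular_on {..<n} f"
    and "\<forall>A \<subseteq> {..<n}. f A \<ge> 0"
    and "f {} = 0"
    and "\<beta> > 0" and "0 < p" and "p < 1"
    and "i < n"
  shows "measure_pmf.expectation (pd_hist E f \<beta> p n)
           (\<lambda>h. marg f (fst (h ! i)) i * (if i \<notin> fst (h ! n) then 1 else 0))
         \<le> max ((1 - p) / p) (1 + \<beta>) *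
           measure_pmf.expectation (pd_hist E f \<beta> p n)
           (\<lambda>h. sum (snd (h ! n)) ((nbhd E n i \<inter> {..<i} \<union> {i}) \<inter> fst (h ! n)))"
proof -
  define c where "c = max ((1 - p) / p) (1 + \<beta>)"
  define X where "X = nbhd E n i \<inter> {..<i} \<union> {i}"
  define G1 where "G1 = (\<lambda>h'::state list. marg f (fst (h' ! i)) i * (if i \<notin> fst (h' ! Suc i) then 1 else 0))"
  define G2 where "G2 = (\<lambda>h'::state list. sum (snd (h' ! Suc i)) (X \<inter> fst (h' ! Suc i)))"
  define N where "N = pd_hist E f \<beta> p n"
  define A where "A = pd_hist E f \<beta> p i"
  define K where "K = (\<lambda>h. map_pmf (\<lambda>s. h @ [s]) (pd_step E f \<beta> p i (last h)))"
  define d where "d = n - Suc i"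
  have nd: "n = Suc i + d" using assms(10) unfolding d_def by simp
  have XS: "X \<subseteq> {..<Suc i}" unfolding X_def by auto
  have eq: "(marg f (fst (h ! i)) i * (if i \<notin> fst (h ! n) then 1 else 0)) = G1 (take (Suc (Suc i)) h)
     \<and> sum (snd (h ! n)) (X \<inter> fst (h ! n)) = G2 (take (Suc (Suc i)) h)"
    if h: "h \<in> set_pmf N" for h
  proof -
    note inv = hist_inv[OF h[unfolded N_def] less_imp_le[OF assms(7)]]
    note mono = conjunct1[OF conjunct2[OF conjunct2[OF inv]]]
    have m: "fst (h!Suc i) \<subseteq> fst (h!n)" "fst (h!n) \<subseteq> fst (h!Suc i) \<union> {Suc i..<n}"
      "\<forall>j<Suc i. snd (h!n) j = snd (h!Suc i) j"
      using mono[rule_format, of "Suc i" n] nd by auto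
    have t1: "take (Suc (Suc i)) h ! i = h ! i" "take (Suc (Suc i)) h ! Suc i = h ! Suc i" by auto
    have "(i \<in> fst (h!n)) = (i \<in> fst (h!Suc i))" using m by auto
    moreover have "X \<inter> fst (h ! n) = X \<inter> fst (h ! Suc i)" using m XS by fastforce
    moreover have "sum (snd (h ! n)) (X \<inter> fst (h ! Suc i)) = sum (snd (h ! Suc i)) (X \<inter> fst (h ! Suc i))"
      using m XS by (intro sum.cong) auto
    ultimately show ?thesis unfolding G1_def G2_def t1 by simp
  qed
  have marg: "map_pmf (take (Suc (Suc i))) N = pd_hist E f \<beta> p (Suc i)"
    unfolding N_def nd by (rule hist_marginal)
  have L: "measure_pmf.expectation N (\<lambda>h. marg f (fst (h ! i)) i * (if i \<notin> fst (h ! n) then 1 else 0))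
      = measure_pmf.expectation (pd_hist E f \<beta> p (Suc i)) G1"
  proof -
    have "measure_pmf.expectation N (\<lambda>h. marg f (fst (h ! i)) i * (if i \<notin> fst (h ! n) then 1 else 0))
        = measure_pmf.expectation N (\<lambda>h. G1 (take (Suc (Suc i)) h))"
      by (rule integral_cong_AE) (auto simp: AE_measure_pmf_iff eq)
    also have "\<dots> = measure_pmf.expectation (map_pmf (take (Suc (Suc i))) N) G1"
      by (rule integral_map_pmf[symmetric])
    finally show ?thesis by (simp only: marg)
  qed
  have R: "measure_pmf.expectation N (\<lambda>h. sum (snd (h ! n)) (X \<inter> fst (h ! n)))
      = measure_pmf.expectation (pd_hist E f \<beta> p (Suc i)) G2"
  proof -
    have "measure_pmf.expectation N (\<lambda>h. sum (snd (h ! n)) (X \<inter> fst (h ! n)))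
        = measure_pmf.expectation N (\<lambda>h. G2 (take (Suc (Suc i)) h))"
      by (rule integral_cong_AE) (auto simp: AE_measure_pmf_iff eq)
    also have "\<dots> = measure_pmf.expectation (map_pmf (take (Suc (Suc i))) N) G2"
      by (rule integral_map_pmf[symmetric])
    finally show ?thesis by (simp only: marg)
  qed
  have H1: "pd_hist E f \<beta> p (Suc i) = bind_pmf A K" unfolding A_def K_def by simp
  have fA: "finite (set_pmf A)" unfolding A_def by (rule hist_finite)
  have fK: "finite (set_pmf (K h))" for h unfolding K_def using step_finite by simp
  have "measure_pmf.expectation (pd_hist E f \<beta> p (Suc i)) G1
      = measure_pmf.expectation A (\<lambda>h. measure_pmf.expectation (K h) G1)"
    unfolding H1 by (rule integral_bind_pmf_fin[OF fA fK])
  also have "\<dots> \<le> measure_pmf.expectation A (\<lambda>h. c * measure_pmf.expectation (K h) G2)"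
  proof (rule integral_mono_AE)
    show "integrable (measure_pmf A) (\<lambda>h. measure_pmf.expectation (K h) G1)"
      by (rule integrable_measure_pmf_finite[OF fA])
    show "integrable (measure_pmf A) (\<lambda>h. c * measure_pmf.expectation (K h) G2)"
      by (rule integrable_measure_pmf_finite[OF fA])
    show "AE h in measure_pmf A. measure_pmf.expectation (K h) G1 \<le> c * measure_pmf.expectation (K h) G2"
      unfolding AE_measure_pmf_iff
    proof
      fix h assume "h \<in> set_pmf A"
      from local_ineq[OF this[unfolded A_def] assms(7,8,9,10)]
      show "measure_pmf.expectation (K h) G1 \<le> c * measure_pmf.expectation (K h) G2"
        unfolding K_def G1_def G2_def c_def X_def .
    qed
  qed
  also have "\<dots> = c * measure_pmf.expectation A (\<lambda>h. measure_pmf.expectation (K h) G2)"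
    by simp
  also have "\<dots> = c * measure_pmf.expectation (pd_hist E f \<beta> p (Suc i)) G2"
    unfolding H1 by (simp add: integral_bind_pmf_fin[OF fA fK])
  finally show ?thesis using L R unfolding N_def c_def X_def by simp
qed

end
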